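(* The set $\ell^\infty\setminus S$ is strongly $\mathfrak{c}$-algebrable in the algebra $\ell^\infty$ (with pointwise operations).
   Context: $\ell^\infty$ is the algebra of bounded real sequences with coordinatewise operations. $S=\{x\in\ell^\infty\colon\lim_n\frac{x_1+\dots+x_n}{n}\text{ exists}\}$. A subset $A$ of a commutative algebra $\mathcal L$ is strongly $\kappa$-algebrable if $A\cup\{0\}$ contains a $\kappa$-generated subalgebra (minimal number of generators of cardinality $\kappa$) which is isomorphic to a free algebra; equivalently, there is a set $Z\subset\mathcal L$ of cardinality $\kappa$ such that for every $n$, every non-zero polynomial $P$ in $n$ variables without constant term and all distinct $z_1,\dots,z_n\in Z$, $P(z_1,\dots,z_n)\in A\setminus\{0\}$. $\mathfrak c$ is the cardinality of the continuum. *)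

theory Defs
  imports "HOL-Analysis.Analysis" "HOL-Library.Equipollence"
begin

text \<open>ell-infinity: bounded real sequences (index 0 plays the role of x_1).\<close>
definition linf :: "(nat \<Rightarrow> real) set" where
  "linf = {x. Bseq x}"

definition cesaro_S :: "(nat \<Rightarrow> real) set" where
  "cesaro_S = {x \<in> linf. convergent (\<lambda>n. (\<Sum>i<Suc n. x i) / real (Suc n))}"

text \<open>A real polynomial in variables 0..n-1 without constant term, given by its
  coefficient function on multi-indices (exponent vectors) alpha.\<close>
definition poly_nc :: "nat \<Rightarrow> ((nat \<Rightarrow> nat) \<Rightarrow> real) \<Rightarrow> bool" where
  "poly_nc n c \<longleftrightarrow> finite {\<alpha>. c \<alpha> \<noteq> 0}
     \<and> (\<forall>\<alpha>. c \<alpha> \<noteq> 0 \<longrightarrow> (\<forall>i\<ge>n. \<alpha> i = 0))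
     \<and> c (\<lambda>_. 0) = 0"

definition poly_eval :: "nat \<Rightarrow> ((nat \<Rightarrow> nat) \<Rightarrow> real) \<Rightarrow> (nat \<Rightarrow> nat \<Rightarrow> real) \<Rightarrow> nat \<Rightarrow> real" where
  "poly_eval n c z = (\<lambda>k. \<Sum>\<alpha>\<in>{\<alpha>. c \<alpha> \<noteq> 0}. c \<alpha> * (\<Prod>i<n. z i k ^ \<alpha> i))"

text \<open>Strong kappa-algebrability of A in the algebra linf, with kappa given as the
  cardinality of a type/set K.\<close>
definition strongly_algebrable_linf :: "(nat \<Rightarrow> real) set \<Rightarrow> 'k set \<Rightarrow> bool" where
  "strongly_algebrable_linf A K \<longleftrightarrow> (\<exists>Z. Z \<subseteq> linf \<and> Z \<approx> K \<and>
     (\<forall>n c z. poly_nc n c \<and> (\<exists>\<alpha>. c \<alpha> \<noteq> 0) \<and> inj_on z {..<n} \<and> z ` {..<n} \<subseteq> Z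
        \<longrightarrow> poly_eval n c z \<in> A \<and> poly_eval n c z \<noteq> (\<lambda>_. 0)))"

end

theory Submission
  imports Defs
begin

definition blk :: "nat \<Rightarrow> nat" where
  "blk k = (LEAST j. k < (fact (Suc j) :: nat))"

lemma blk_eq:
  assumes "1 \<le> j" "(fact j :: nat) \<le> k" "k < (fact (Suc j) :: nat)"
  shows "blk k = j"
  unfolding blk_def
proof (rule Least_equality)
  show "k < fact (Suc j)" by fact
next
  fix i assume "k < (fact (Suc i) :: nat)"
  show "j \<le> i"
  proof (rule ccontr)
    assume "\<not> j \<le> i"
    then have "Suc i \<le> j" by simp
    then have "(fact (Suc i) :: nat) \<le> fact j" by (rule fact_mono)
    with assms(2) \<open>k < fact (Suc i)\<close> show False by simp
  qed
qed

lemma cesaro_blocks: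
  fixes w V :: "nat \<Rightarrow> real"
  assumes w: "\<And>k. w k = V (blk k)" and bnd: "\<And>j. \<bar>V j\<bar> \<le> B"
    and odd0: "\<And>j. V (Suc (2*j)) = 0"
    and conv: "convergent (\<lambda>n. (\<Sum>i<Suc n. w i) / real (Suc n))"
  shows "(\<lambda>m. V (2*m)) \<longlonglongrightarrow> 0"
proof -
  define a where "a = (\<lambda>n. (\<Sum>i<Suc n. w i) / real (Suc n))"
  from conv obtain l where l: "a \<longlonglongrightarrow> l" unfolding a_def convergent_def by blast
  define s where "s = (\<lambda>j. (fact (Suc j) :: nat) - 1)"
  have sS: "Suc (s j) = fact (Suc j)" for j
    unfolding s_def using fact_ge_1[of "Suc j", where 'a=nat] by simp
  have sge: "j \<le> s j" for j
  proof -
    have "Suc j \<le> (fact (Suc j) :: nat)" by (rule fact_ge_self)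
    then show ?thesis using sS[of j] by simp
  qed
  have "filterlim s at_top sequentially"
    by (rule filterlim_at_top_mono[OF filterlim_ident]) (use sge in auto)
  then have as: "(\<lambda>j. a (s j)) \<longlonglongrightarrow> l"
    by (rule filterlim_compose[OF l])
  have B0: "0 \<le> B" using bnd[of 0] by simp
  have key: "\<bar>a (s j) - V j\<bar> \<le> 2 * B / real (Suc j)" if j1: "1 \<le> j" for j
  proof -
    let ?F = "(fact j :: nat)" and ?G = "(fact (Suc j) :: nat)"
    have FG: "?F \<le> ?G" by (rule fact_mono) simp
    have split: "(\<Sum>i<?G. w i) = (\<Sum>i<?F. w i) + (\<Sum>i\<in>{?F..<?G}. w i)"
      using sum.atLeastLessThan_concat[of 0 ?F ?G w] FG by (simp add: atLeast0LessThan)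
    have const: "(\<Sum>i\<in>{?F..<?G}. w i) = real (?G - ?F) * V j"
    proof -
      have "(\<Sum>i\<in>{?F..<?G}. w i) = (\<Sum>i\<in>{?F..<?G}. V j)"
        by (rule sum.cong) (use j1 blk_eq[of j] in \<open>auto simp: w\<close>)
      then show ?thesis by simp
    qed
    have sb: "\<bar>\<Sum>i<?F. w i\<bar> \<le> real ?F * B"
    proof -
      have "\<bar>\<Sum>i<?F. w i\<bar> \<le> (\<Sum>i<?F. \<bar>w i\<bar>)" by (rule sum_abs)
      also have "\<dots> \<le> (\<Sum>i<?F. B)" by (rule sum_mono) (simp add: w bnd)
      finally show ?thesis by simp
    qed
    have Gpos: "real ?G > 0" by (metis fact_gt_zero of_nat_0_less_iff)
    have GF: "real ?G = real (Suc j) * real ?F" by (simp add: algebra_simps)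
    have "a (s j) = (\<Sum>i<?G. w i) / real ?G" unfolding a_def sS ..
    then have "a (s j) - V j = ((\<Sum>i<?F. w i) - real ?F * V j) / real ?G"
      using split const Gpos FG by (simp add: field_simps of_nat_diff)
    then have "\<bar>a (s j) - V j\<bar> = \<bar>(\<Sum>i<?F. w i) - real ?F * V j\<bar> / real ?G"
      using Gpos by simp
    also have "\<dots> \<le> (real ?F * B + real ?F * B) / real ?G"
    proof (rule divide_right_mono)
      have "\<bar>real ?F * V j\<bar> \<le> real ?F * B"
        using bnd[of j] by (simp add: abs_mult mult_left_mono)
      then show "\<bar>(\<Sum>i<?F. w i) - real ?F * V j\<bar> \<le> real ?F * B + real ?F * B"
        using sb by linarith
    qed simp
    also have "\<dots> = 2 * B / real (Suc j)"
    proof -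
      have Fp: "real ?F > 0" by (metis fact_gt_zero of_nat_0_less_iff)
      have gen: "F > 0 \<Longrightarrow> (F*B+F*B)/(S*F) = 2*B/S" for F S :: real
        by (simp add: field_simps)
      show ?thesis unfolding GF by (rule gen[OF Fp])
    qed
    finally show ?thesis .
  qed
  have "(\<lambda>j. a (s j) - V j) \<longlonglongrightarrow> 0"
  proof (rule Lim_null_comparison)
    show "\<forall>\<^sub>F j in sequentially. norm (a (s j) - V j) \<le> 2 * B / real (Suc j)"
      using key by (auto intro!: eventually_sequentiallyI[of 1])
    show "(\<lambda>j. 2 * B / real (Suc j)) \<longlonglongrightarrow> 0"
      using LIMSEQ_Suc[OF lim_const_over_n[of "2*B"]] by simp
  qed
  with as have VL: "V \<longlonglongrightarrow> l"
    using tendsto_diff[OF as] by fastforce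
  have "(\<lambda>j. V (Suc (2*j))) \<longlonglongrightarrow> l"
    by (rule LIMSEQ_subseq_LIMSEQ[OF VL, unfolded o_def]) (simp add: strict_mono_def)
  then have "l = 0" using odd0 by (simp add: LIMSEQ_const_iff)
  have "(\<lambda>j. V (2*j)) \<longlonglongrightarrow> l"
    by (rule LIMSEQ_subseq_LIMSEQ[OF VL, unfolded o_def]) (simp add: strict_mono_def)
  with \<open>l = 0\<close> show ?thesis by simp
qed

definition fsel :: "real \<Rightarrow> (nat \<times> int \<times> nat) list \<Rightarrow> nat" where
  "fsel r L = Max (insert 0 {j. \<exists>k a. (k, a, j) \<in> set L \<and> \<lfloor>r * real k\<rfloor> = a})"

definition enum :: "nat \<Rightarrow> (nat \<times> int \<times> nat) list" where
  "enum m = from_nat (fst (prod_decode m))"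

lemma enum_hit: "\<exists>m\<ge>M. enum m = L"
proof (intro exI conjI)
  show "M \<le> prod_encode (to_nat L, M)" by (rule le_prod_encode_2)
  show "enum (prod_encode (to_nat L, M)) = L"
    by (simp add: enum_def prod_encode_inverse)
qed

lemma floor_eq_close: "\<lfloor>x\<rfloor> = \<lfloor>y\<rfloor> \<Longrightarrow> \<bar>x - y\<bar> < (1::real)"
  by linarith

lemma hit:
  fixes r :: "nat \<Rightarrow> real" and t :: "nat \<Rightarrow> nat"
  assumes inj: "inj_on r {..<n}"
  shows "\<exists>m\<ge>M. \<forall>i<n. fsel (r i) (enum m) = t i"
proof -
  define G where "G = (\<lambda>(i, i'). 1 / \<bar>r i - r i'\<bar>) ` ({..<n} \<times> {..<n})"
  have finG: "finite G" unfolding G_def by simp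
  define K where "K = Suc (nat \<lceil>Max (insert 0 G)\<rceil>)"
  have sep: "\<lfloor>r i * real K\<rfloor> \<noteq> \<lfloor>r i' * real K\<rfloor>"
    if "i < n" "i' < n" "i \<noteq> i'" for i i'
  proof
    assume eq: "\<lfloor>r i * real K\<rfloor> = \<lfloor>r i' * real K\<rfloor>"
    have ne: "r i \<noteq> r i'" using inj that by (auto simp: inj_on_def)
    have "1 / \<bar>r i - r i'\<bar> \<in> G" unfolding G_def using that by force
    then have "1 / \<bar>r i - r i'\<bar> \<le> Max (insert 0 G)" using finG by simp
    also have "\<dots> < real K" unfolding K_def by linarith
    finally have "1 / \<bar>r i - r i'\<bar> < real K" .
    then have "1 < \<bar>r i - r i'\<bar> * real K" using ne by (simp add: field_simps)
    also have "\<dots> = \<bar>r i * real K - r i' * real K\<bar>" by (simp add: abs_mult flip: left_diff_distrib)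
    finally show False using floor_eq_close[OF eq] by simp
  qed
  define L where "L = map (\<lambda>i. (K, \<lfloor>r i * real K\<rfloor>, t i)) [0..<n]"
  have fs: "fsel (r i) L = t i" if "i < n" for i
  proof -
    have "{j. \<exists>k a. (k, a, j) \<in> set L \<and> \<lfloor>r i * real k\<rfloor> = a} = {t i}"
    proof (intro equalityI subsetI)
      fix j assume "j \<in> {j. \<exists>k a. (k, a, j) \<in> set L \<and> \<lfloor>r i * real k\<rfloor> = a}"
      then obtain i' where "i' < n" "\<lfloor>r i * real K\<rfloor> = \<lfloor>r i' * real K\<rfloor>" "j = t i'"
        unfolding L_def by auto
      with sep[of i i'] that show "j \<in> {t i}" by (cases "i = i'") auto
    next
      fix j assume "j \<in> {t i}"
      then show "j \<in> {j. \<exists>k a. (k, a, j) \<in> set L \<and> \<lfloor>r i * real k\<rfloor> = a}"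
        using that unfolding L_def by force
    qed
    then show ?thesis unfolding fsel_def by simp
  qed
  obtain m where "m \<ge> M" "enum m = L" using enum_hit by blast
  then show ?thesis using fs by auto
qed

lemma base_inj:
  fixes D :: nat
  shows "(\<forall>i<n. \<alpha> i < D) \<Longrightarrow> (\<forall>i<n. \<beta> i < D) \<Longrightarrow>
    (\<Sum>i<n. \<alpha> i * D ^ i) = (\<Sum>i<n. \<beta> i * D ^ i) \<Longrightarrow> \<forall>i<n. \<alpha> i = \<beta> i"
proof (induction n arbitrary: \<alpha> \<beta>)
  case 0
  then show ?case by simp
next
  case (Suc n)
  have ea: "(\<Sum>i<Suc n. \<alpha> i * D ^ i) = \<alpha> 0 + D * (\<Sum>i<n. \<alpha> (Suc i) * D ^ i)" for \<alpha>
    unfolding sum.lessThan_Suc_shift by (simp add: sum_distrib_left mult_ac)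
  have a0: "\<alpha> 0 < D" "\<beta> 0 < D" using Suc.prems by auto
  have eq: "\<alpha> 0 + D * (\<Sum>i<n. \<alpha> (Suc i) * D ^ i) = \<beta> 0 + D * (\<Sum>i<n. \<beta> (Suc i) * D ^ i)"
    using Suc.prems(3) ea[of \<alpha>] ea[of \<beta>] by simp
  then have "(\<alpha> 0 + D * (\<Sum>i<n. \<alpha> (Suc i) * D ^ i)) mod D = (\<beta> 0 + D * (\<Sum>i<n. \<beta> (Suc i) * D ^ i)) mod D"
    by simp
  then have h0: "\<alpha> 0 = \<beta> 0" using a0 by simp
  with eq have "D * (\<Sum>i<n. \<alpha> (Suc i) * D ^ i) = D * (\<Sum>i<n. \<beta> (Suc i) * D ^ i)" by simp
  moreover have "D > 0" using a0 by simp
  ultimately have "(\<Sum>i<n. \<alpha> (Suc i) * D ^ i) = (\<Sum>i<n. \<beta> (Suc i) * D ^ i)" by simp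
  moreover have p1: "\<forall>i<n. \<alpha> (Suc i) < D" using Suc.prems(1) by simp
  moreover have p2: "\<forall>i<n. \<beta> (Suc i) < D" using Suc.prems(2) by simp
  ultimately have "\<forall>i<n. \<alpha> (Suc i) = \<beta> (Suc i)"
    using Suc.IH[of "\<lambda>i. \<alpha> (Suc i)" "\<lambda>i. \<beta> (Suc i)"] by blast
  with h0 show ?case by (auto simp: less_Suc_eq_0_disj)
qed

lemma poly_nonvanish:
  assumes pc: "poly_nc n c" and a0: "c \<alpha>0 \<noteq> 0"
  shows "\<exists>tt :: nat \<Rightarrow> nat. (\<Sum>\<alpha>\<in>{\<alpha>. c \<alpha> \<noteq> 0}. c \<alpha> * (\<Prod>i<n. ((1/2::real) ^ tt i) ^ \<alpha> i)) \<noteq> 0"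
proof -
  define A where "A = {\<alpha>. c \<alpha> \<noteq> 0}"
  have finA: "finite A" using pc unfolding poly_nc_def A_def by simp
  have out: "\<alpha> i = 0" if "\<alpha> \<in> A" "i \<ge> n" for \<alpha> i
    using pc that unfolding poly_nc_def A_def by auto
  define D where "D = Suc (Max (insert 0 ((\<lambda>(\<alpha>, i). \<alpha> i) ` (A \<times> {..<n}))))"
  have Dlt: "\<alpha> i < D" if "\<alpha> \<in> A" "i < n" for \<alpha> i
  proof -
    have "\<alpha> i \<in> insert 0 ((\<lambda>(\<alpha>, i). \<alpha> i) ` (A \<times> {..<n}))" using that by force
    then have "\<alpha> i \<le> Max (insert 0 ((\<lambda>(\<alpha>, i). \<alpha> i) ` (A \<times> {..<n})))"
      using finA by simp
    then show ?thesis unfolding D_def by simp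
  qed
  define E where "E = (\<lambda>\<alpha>. \<Sum>i<n. \<alpha> i * D ^ i)"
  have injE: "inj_on E A"
  proof (rule inj_onI)
    fix \<alpha> \<beta> assume ab: "\<alpha> \<in> A" "\<beta> \<in> A" "E \<alpha> = E \<beta>"
    have d1: "\<forall>i<n. \<alpha> i < D" using Dlt ab(1) by blast
    have d2: "\<forall>i<n. \<beta> i < D" using Dlt ab(2) by blast
    have "\<forall>i<n. \<alpha> i = \<beta> i"
      using base_inj[OF d1 d2] ab(3) unfolding E_def by blast
    then show "\<alpha> = \<beta>" using out[OF ab(1)] out[OF ab(2)]
      by (metis not_le_imp_less ext)
  qed
  define Q where "Q = (\<Sum>\<alpha>\<in>A. monom (c \<alpha>) (E \<alpha>))"
  have a0A: "\<alpha>0 \<in> A" using a0 unfolding A_def by simp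
  have "coeff Q (E \<alpha>0) = (\<Sum>\<alpha>\<in>A. if \<alpha> = \<alpha>0 then c \<alpha> else 0)"
    unfolding Q_def coeff_sum coeff_monom
    by (rule sum.cong) (use injE a0A in \<open>auto simp: inj_on_def\<close>)
  also have "\<dots> = c \<alpha>0" using finA a0A by simp
  finally have "Q \<noteq> 0" using a0 by auto
  then have finR: "finite {x. poly Q x = 0}" by (rule poly_roots_finite)
  have "inj (\<lambda>t::nat. (1/2::real) ^ t)"
    by (rule injI) (simp add: power_inject_exp')
  then have "infinite (range (\<lambda>t::nat. (1/2::real) ^ t))"
    by (simp add: finite_image_iff)
  then obtain t :: nat where t: "poly Q ((1/2) ^ t) \<noteq> 0"
    using finR by (metis (mono_tags, lifting) finite_subset image_subset_iff mem_Collect_eq)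
  have pe: "poly Q y = (\<Sum>\<alpha>\<in>A. c \<alpha> * y ^ E \<alpha>)" for y
    unfolding Q_def by (simp add: poly_sum poly_monom)
  have mon: "(\<Prod>i<n. ((1/2::real) ^ (t * D ^ i)) ^ \<alpha> i) = ((1/2) ^ t) ^ E \<alpha>" for \<alpha>
    unfolding E_def power_sum by (simp add: power_mult[symmetric] mult_ac)
  show ?thesis
    by (rule exI[of _ "\<lambda>i. t * D ^ i"]) (use t in \<open>simp add: mon pe A_def\<close>)
qed

definition gval :: "real \<Rightarrow> nat \<Rightarrow> real" where
  "gval r j = (if even j then (1/2) ^ fsel r (enum (j div 2)) else 0)"

definition gen :: "real \<Rightarrow> nat \<Rightarrow> real" where
  "gen r k = gval r (blk k)"

lemma gval_bounds: "0 \<le> gval r j" "gval r j \<le> 1"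
  unfolding gval_def by (auto simp: power_le_one)

lemma blk_fact: assumes "1 \<le> j" shows "blk (fact j) = j"
proof (rule blk_eq[OF assms])
  have "(fact j :: nat) > 0" by simp
  moreover have "(fact (Suc j) :: nat) = Suc j * fact j" by simp
  ultimately show "(fact j :: nat) < fact (Suc j)" using assms by simp
qed simp

lemma gen_even: assumes "1 \<le> m" shows "gen r (fact (2*m)) = (1/2) ^ fsel r (enum m)"
  using assms unfolding gen_def gval_def by (simp add: blk_fact)

lemma inj_gen: "inj gen"
proof (rule injI)
  fix r s assume eq: "gen r = gen s"
  show "r = s"
  proof (rule ccontr)
    assume ne: "r \<noteq> s"
    define rr where "rr = (\<lambda>i::nat. if i = 0 then r else s)"
    have "inj_on rr {..<2}" using ne unfolding rr_def by (auto simp: inj_on_def)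
    from hit[OF this, of 1 "\<lambda>i. if i = 0 then 0 else 1"] obtain m where
      m: "m \<ge> 1" "\<forall>i<2. fsel (rr i) (enum m) = (if i = 0 then 0 else 1)" by blast
    have "fsel r (enum m) = 0" "fsel s (enum m) = 1"
      using m(2)[rule_format, of 0] m(2)[rule_format, of 1] by (auto simp: rr_def)
    then have "gen r (fact (2*m)) = 1" "gen s (fact (2*m)) = 1/2"
      using gen_even[OF m(1)] by auto
    with eq show False by simp
  qed
qed

theorem theorem3p5:
  shows "strongly_algebrable_linf (linf - cesaro_S) (UNIV :: real set)"
  unfolding strongly_algebrable_linf_def
proof (intro exI conjI allI impI)
  show "range gen \<subseteq> linf"
    unfolding linf_def using gval_bounds
    by (auto intro!: BseqI'[of _ 1] simp: gen_def)
  have "bij_betw gen (UNIV :: real set) (range gen)" using inj_gen by (simp add: bij_betw_def)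
  then have "(UNIV :: real set) \<approx> range gen" unfolding eqpoll_def by (intro exI[of _ gen])
  then show "range gen \<approx> (UNIV :: real set)" by (rule eqpoll_sym)
next
  fix n c z
  assume H: "poly_nc n c \<and> (\<exists>\<alpha>. c \<alpha> \<noteq> 0) \<and> inj_on z {..<n} \<and> z ` {..<n} \<subseteq> range gen"
  then have pc: "poly_nc n c" and injz: "inj_on z {..<n}" and zZ: "z ` {..<n} \<subseteq> range gen"
    by auto
  from H obtain \<alpha>0 where a0: "c \<alpha>0 \<noteq> 0" by auto
  define A where "A = {\<alpha>. c \<alpha> \<noteq> 0}"
  have finA: "finite A" using pc unfolding poly_nc_def A_def by simp
  define r where "r = (\<lambda>i. SOME s. z i = gen s)"
  have zr: "z i = gen (r i)" if "i < n" for i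
  proof -
    from zZ that obtain s where "z i = gen s" by auto
    then show ?thesis unfolding r_def by (rule someI)
  qed
  have injr: "inj_on r {..<n}"
  proof (rule inj_onI)
    fix i i' assume "i \<in> {..<n}" "i' \<in> {..<n}" "r i = r i'"
    then have "z i = z i'" using zr by auto
    with injz \<open>i \<in> {..<n}\<close> \<open>i' \<in> {..<n}\<close> show "i = i'" by (auto simp: inj_on_def)
  qed
  define V where "V = (\<lambda>j. \<Sum>\<alpha>\<in>A. c \<alpha> * (\<Prod>i<n. gval (r i) j ^ \<alpha> i))"
  have PV: "poly_eval n c z = (\<lambda>k. V (blk k))"
    unfolding poly_eval_def V_def A_def
    by (rule ext, rule sum.cong, simp, rule arg_cong[where f = "\<lambda>x. _ * x"], rule prod.cong)
       (auto simp: zr gen_def)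
  define B where "B = (\<Sum>\<alpha>\<in>A. \<bar>c \<alpha>\<bar>)"
  have Vb: "\<bar>V j\<bar> \<le> B" for j
  proof -
    have "\<bar>V j\<bar> \<le> (\<Sum>\<alpha>\<in>A. \<bar>c \<alpha> * (\<Prod>i<n. gval (r i) j ^ \<alpha> i)\<bar>)"
      unfolding V_def by (rule sum_abs)
    also have "\<dots> \<le> B" unfolding B_def
    proof (rule sum_mono)
      fix \<alpha>
      have "\<bar>\<Prod>i<n. gval (r i) j ^ \<alpha> i\<bar> \<le> 1"
        unfolding abs_prod
        by (rule prod_le_1) (use gval_bounds in \<open>auto simp: power_le_one\<close>)
      then show "\<bar>c \<alpha> * (\<Prod>i<n. gval (r i) j ^ \<alpha> i)\<bar> \<le> \<bar>c \<alpha>\<bar>"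
        by (simp add: abs_mult mult_left_le)
    qed
    finally show ?thesis .
  qed
  have Vodd: "V (Suc (2*j)) = 0" for j
  proof -
    have P0: "(\<Prod>i<n. gval (r i) (Suc (2*j)) ^ \<alpha> i) = 0" if "\<alpha> \<in> A" for \<alpha>
    proof -
      have "\<alpha> \<noteq> (\<lambda>_. 0)" using that pc unfolding A_def poly_nc_def by auto
      then obtain i where "\<alpha> i \<noteq> 0" by auto
      moreover have "i < n"
      proof (rule ccontr)
        assume "\<not> i < n"
        then have "\<alpha> i = 0" using that pc unfolding A_def poly_nc_def by auto
        with \<open>\<alpha> i \<noteq> 0\<close> show False by simp
      qed
      ultimately show ?thesis by (auto simp: gval_def intro!: prod_zero)
    qed
    show ?thesis unfolding V_def
    proof (rule sum.neutral, rule ballI)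
      fix \<alpha> assume "\<alpha> \<in> A"
      then show "c \<alpha> * (\<Prod>i<n. gval (r i) (Suc (2*j)) ^ \<alpha> i) = 0"
        using P0[of \<alpha>] by (simp only: mult_zero_right)
    qed
  qed
  obtain tt where tt: "(\<Sum>\<alpha>\<in>A. c \<alpha> * (\<Prod>i<n. ((1/2::real) ^ tt i) ^ \<alpha> i)) \<noteq> 0"
    using poly_nonvanish[OF pc a0] unfolding A_def by blast
  define C where "C = (\<Sum>\<alpha>\<in>A. c \<alpha> * (\<Prod>i<n. ((1/2::real) ^ tt i) ^ \<alpha> i))"
  have nc: "\<not> convergent (\<lambda>N. (\<Sum>i<Suc N. poly_eval n c z i) / real (Suc N))"
  proof
    assume cv: "convergent (\<lambda>N. (\<Sum>i<Suc N. poly_eval n c z i) / real (Suc N))"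
    have "(\<lambda>m. V (2*m)) \<longlonglongrightarrow> 0"
      by (rule cesaro_blocks[of "poly_eval n c z" V B]) (use PV Vb Vodd cv in auto)
    moreover have "\<bar>C\<bar> > 0" using tt unfolding C_def by simp
    ultimately obtain M where M: "\<forall>m\<ge>M. norm (V (2*m) - 0) < \<bar>C\<bar>"
      using LIMSEQ_D by blast
    obtain m where m: "m \<ge> M" "\<forall>i<n. fsel (r i) (enum m) = tt i"
      using hit[OF injr] by blast
    have "V (2*m) = C"
      unfolding V_def C_def
    proof (rule sum.cong[OF refl])
      fix \<alpha> assume "\<alpha> \<in> A"
      have "(\<Prod>i<n. gval (r i) (2*m) ^ \<alpha> i) = (\<Prod>i<n. ((1/2::real) ^ tt i) ^ \<alpha> i)"
      proof (rule prod.cong[OF refl])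
        fix i assume "i \<in> {..<n}"
        then have "fsel (r i) (enum m) = tt i" using m(2) by simp
        then show "gval (r i) (2*m) ^ \<alpha> i = ((1/2::real) ^ tt i) ^ \<alpha> i"
          unfolding gval_def by simp
      qed
      then show "c \<alpha> * (\<Prod>i<n. gval (r i) (2*m) ^ \<alpha> i) = c \<alpha> * (\<Prod>i<n. ((1/2::real) ^ tt i) ^ \<alpha> i)"
        by simp
    qed
    with M m(1) show False by auto
  qed
  have bs: "poly_eval n c z \<in> linf"
    unfolding linf_def using Vb by (auto intro!: BseqI'[of _ B] simp: PV)
  show "poly_eval n c z \<in> linf - cesaro_S"
    using bs nc unfolding cesaro_S_def by auto
  show "poly_eval n c z \<noteq> (\<lambda>_. 0)"
  proof
    assume "poly_eval n c z = (\<lambda>_. 0)"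
    then have "convergent (\<lambda>N. (\<Sum>i<Suc N. poly_eval n c z i) / real (Suc N))"
      by (simp add: convergent_const)
    with nc show False by simp
  qed
qed

end
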